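(* Let $b>a\ge0$, let $w$ be a palindrome and let $x\in\mathbb{R}$ satisfy $x\ge\phi_w(0)$. Let $m=|10w|$, $v(x)=(x,1)^T$ and for $n\in\mathbb{Z}_+$, $k=1,\dots,m$ define $$x_{nm+k}(x)=\big[M\big((10w)^n(10w)_{1:k}\big)v(x)\big]_2,\qquad y_{nm+k}(x)=\big[M\big((01w)^n(01w)_{1:k}\big)v(x)\big]_2,$$ $\sigma_x^{(n)}=(x_{nm+1}(x),\dots,x_{nm+m}(x))$ and $\sigma_y^{(n)}=(y_{nm+1}(x),\dots,y_{nm+m}(x))$. Then for every $n\in\mathbb{Z}_+$, $\sigma_x^{(n)}$ and $\sigma_y^{(n)}$ are non-decreasing sequences of non-negative reals and $\sigma_x^{(n)}\prec^w\sigma_y^{(n)}$; i.e. $\sum_{k=1}^{j}x_{nm+k}(x)\ge\sum_{k=1}^{j}y_{nm+k}(x)$ for all $j=1,\dots,m$.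
   Context: Words are finite strings over $\{0,1\}$, $\epsilon$ the empty word, $w_k$ the $k$-th letter, $w_{1:k}=w_1\cdots w_k$, $|w|$ the length, $w^n$ the $n$-fold repetition, $\mathbb{Z}_+=\{0,1,2,\dots\}$; a palindrome is a word equal to its reverse. Define $F=\begin{pmatrix}1&1\\ a&1+a\end{pmatrix}$, $G=\begin{pmatrix}1&1\\ b&1+b\end{pmatrix}$, and for a word $w$, $M(w):=M(w_{|w|})\cdots M(w_1)$ with $M(\epsilon)=I$, $M(0)=F$, $M(1)=G$. $[u]_2$ is the second component of a vector $u$. With $\phi_0(x)=\frac{x+1}{ax+a+1}$, $\phi_1(x)=\frac{x+1}{bx+b+1}$ and $\phi_w=\phi_{w_{|w|}}\circ\cdots\circ\phi_{w_1}$, one has $\phi_w(0)=[M(w)]_{12}/[M(w)]_{22}$. For $x,y\in\mathbb{R}^m$ with entries sorted ascending as $x_{(1)}\le\dots\le x_{(m)}$, weak supermajorisation $x\prec^w y$ means $\sum_{k=1}^j x_{(k)}\ge\sum_{k=1}^j y_{(k)}$ for all $j=1,\dots,m$. *)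

theory Defs
  imports "HOL-Analysis.Analysis"
begin

text \<open>Words over {0,1} are bool lists: False = letter 0, True = letter 1.
  Matrices are real^2^2 (rows indexed 1,2); entry (i,j) is M $ i $ j.\<close>

definition Fmat :: "real \<Rightarrow> real^2^2" where
  "Fmat a = vector [vector [1, 1], vector [a, 1 + a]]"

definition letterM :: "real \<Rightarrow> real \<Rightarrow> bool \<Rightarrow> real^2^2" where
  "letterM a b c = (if c then Fmat b else Fmat a)"

fun Mw :: "real \<Rightarrow> real \<Rightarrow> bool list \<Rightarrow> real^2^2" where
  "Mw a b [] = mat 1"
| "Mw a b (c # w) = Mw a b w ** letterM a b c"

definition phi :: "real \<Rightarrow> real \<Rightarrow> bool \<Rightarrow> real \<Rightarrow> real" where
  "phi a b c x = (if c then (x + 1) / (b * x + b + 1) else (x + 1) / (a * x + a + 1))"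

text \<open>phi_w = phi_{w_|w|} o ... o phi_{w_1}: w_1 is applied first.\<close>
definition phiw :: "real \<Rightarrow> real \<Rightarrow> bool list \<Rightarrow> real \<Rightarrow> real" where
  "phiw a b w x = foldl (\<lambda>y c. phi a b c y) x w"

definition wpow :: "bool list \<Rightarrow> nat \<Rightarrow> bool list" where
  "wpow u n = concat (replicate n u)"

definition seqval :: "real \<Rightarrow> real \<Rightarrow> bool list \<Rightarrow> nat \<Rightarrow> nat \<Rightarrow> real \<Rightarrow> real" where
  "seqval a b u n k x = (Mw a b (wpow u n @ take k u) *v vector [x, 1]) $ 2"

end

theory Submission
  imports Defs
begin

lemma mv1: "((A::real^2^2) *v z)$1 = A$1$1*z$1 + A$1$2*z$2"
  by (simp add: matrix_vector_mult_def sum_2)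
lemma mv2: "((A::real^2^2) *v z)$2 = A$2$1*z$1 + A$2$2*z$2"
  by (simp add: matrix_vector_mult_def sum_2)
lemma mm: "((A::real^2^2) ** B)$i$j = A$i$1*B$1$j + A$i$2*B$2$j"
  by (simp add: matrix_matrix_mult_def sum_2)
lemma Fm: "Fmat t $1$1 = 1" "Fmat t $1$2 = 1" "Fmat t $2$1 = t" "Fmat t $2$2 = 1+t"
  by (simp_all add: Fmat_def)
lemma mat1: "(mat 1::real^2^2)$1$1 = 1" "(mat 1::real^2^2)$1$2 = 0"
  "(mat 1::real^2^2)$2$1 = 0" "(mat 1::real^2^2)$2$2 = 1"
  by (simp_all add: mat_def)
lemma letterM_eq: "letterM a b c = Fmat (if c then b else a)"
  by (simp add: letterM_def)

lemma Mw_append: "Mw a b (u @ v) = Mw a b v ** Mw a b u"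
  by (induction u) (auto simp: matrix_mul_assoc)

lemma Mw_single: "Mw a b [c] = letterM a b c" by simp

lemma Mw_snoc: "Mw a b (u @ [c]) = letterM a b c ** Mw a b u"
  by (simp add: Mw_append)

lemma Mw_props:
  assumes "0 \<le> a" "0 \<le> b"
  shows "0 \<le> Mw a b u $1$2 \<and> 0 \<le> Mw a b u $2$1 \<and> 1 \<le> Mw a b u $1$1 \<and> 1 \<le> Mw a b u $2$2
     \<and> Mw a b u $1$1 * Mw a b u $2$2 - Mw a b u $1$2 * Mw a b u $2$1 = 1"
proof (induction u)
  case Nil
  then show ?case by (simp add: mat1)
next
  case (Cons c u)
  define t where "t = (if c then b else a)"
  have t0: "0 \<le> t" using assms by (simp add: t_def)
  have e: "Mw a b (c # u) = Mw a b u ** Fmat t" by (simp add: letterM_eq t_def)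
  define M where "M = Mw a b u"
  have h: "0 \<le> M$1$2" "0 \<le> M$2$1" "1 \<le> M$1$1" "1 \<le> M$2$2" "M$1$1 * M$2$2 - M$1$2 * M$2$1 = 1"
    using Cons by (simp_all add: M_def)
  have p: "0 \<le> t * M$1$2" "0 \<le> t * M$2$2" "0 \<le> t*M$1$1" "0 \<le> t*M$2$1"
    using h t0 by auto
  show ?case unfolding e mm Fm M_def[symmetric]
    using h p by (auto simp: algebra_simps)
qed

lemma Mw_rev:
  "Mw a b u $2$1 = Mw a b (rev u) $2$1 \<and>
   Mw a b u $2$2 = Mw a b (rev u) $1$1 + Mw a b (rev u) $2$1 \<and>
   Mw a b u $1$1 = Mw a b (rev u) $2$2 - Mw a b (rev u) $2$1 \<and>
   Mw a b u $1$2 = Mw a b (rev u) $1$2 + Mw a b (rev u) $2$2 - Mw a b (rev u) $1$1 - Mw a b (rev u) $2$1"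
proof (induction u)
  case Nil
  then show ?case by (simp add: mat1)
next
  case (Cons c u)
  define t where "t = (if c then b else a)"
  have e: "Mw a b (c # u) = Mw a b u ** Fmat t" by (simp add: letterM_eq t_def)
  have e2: "Mw a b (rev (c # u)) = Fmat t ** Mw a b (rev u)" by (simp add: Mw_snoc letterM_eq t_def)
  define N where "N = Mw a b (rev u)"
  have h: "Mw a b u $2$1 = N$2$1" "Mw a b u $2$2 = N$1$1 + N$2$1" "Mw a b u $1$1 = N$2$2 - N$2$1"
     "Mw a b u $1$2 = N$1$2 + N$2$2 - N$1$1 - N$2$1" using Cons by (simp_all add: N_def)
  show ?case unfolding e e2 mm Fm h N_def[symmetric]
    by (simp add: algebra_simps)
qed

definition esum :: "real^2 \<Rightarrow> real" where "esum z = z$1 + z$2"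

lemma Mw_nonneg:
  assumes "0 \<le> a" "0 \<le> b" "0 \<le> z$1" "0 \<le> z$2"
  shows "0 \<le> (Mw a b u *v z)$1 \<and> 0 \<le> (Mw a b u *v z)$2"
  using Mw_props[OF assms(1,2), of u] assms(3,4) unfolding mv1 mv2
  by (auto intro!: add_nonneg_nonneg mult_nonneg_nonneg)

lemma Mw_esum:
  assumes "0 \<le> a" "0 \<le> b" "0 \<le> z$1" "0 \<le> z$2"
  shows "esum z \<le> esum (Mw a b u *v z)"
proof -
  define M where "M = Mw a b u"
  have h: "0 \<le> M$1$2" "0 \<le> M$2$1" "1 \<le> M$1$1" "1 \<le> M$2$2"
    using Mw_props[OF assms(1,2), of u] by (simp_all add: M_def)
  have "z$1 \<le> M$1$1 * z$1" using h assms by (simp add: mult_le_cancel_right1)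
  moreover have "z$2 \<le> M$2$2 * z$2" using h assms by (simp add: mult_le_cancel_right1)
  moreover have "0 \<le> M$1$2 * z$2" "0 \<le> M$2$1 * z$1" using h assms by auto
  ultimately show ?thesis unfolding esum_def mv1 mv2 M_def[symmetric] by linarith
qed

lemma concat_rep_shift: "xs @ concat (replicate n (ys @ xs)) = concat (replicate n (xs @ ys)) @ xs"
  by (induction n) auto

lemma concat_rep_Suc: "concat (replicate (Suc n) u) = concat (replicate n u) @ u"
  using concat_rep_shift[of u n "[]"] by simp

lemma rev_wpow: "rev (wpow u n) = wpow (rev u) n"
  by (simp add: wpow_def rev_concat rev_map)

lemma rev_crep: "rev (concat (replicate n u)) = concat (replicate n (rev u))"
  by (simp add: rev_concat rev_map)

lemma revL1: assumes "rev w = w"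
  shows "rev (w @ wpow ([True,False]@w) n) = w @ wpow ([False,True]@w) n"
  using assms concat_rep_shift[of w n "[False,True]"] by (simp add: wpow_def rev_crep)

lemma revL2: assumes "rev w = w"
  shows "rev (wpow ([True,False]@w) n @ [True,False]) = wpow ([False,True]@w) n @ [False,True]"
  using assms concat_rep_shift[of "[False,True]" n w] by (simp add: wpow_def rev_crep)

lemma phiw_foldl: "phiw a b (u @ [c]) y = phi a b c (phiw a b u y)"
  by (simp add: phiw_def)

lemma frac_aux:
  fixes p q t :: real assumes "0 < q" "0 \<le> t" "0 \<le> p"
  shows "(p/q + 1) / (t * p / q + t + 1) = (p + q) / (t * p + (1 + t) * q)"
proof -
  have "p/q + 1 = (p+q)/q" using assms by (simp add: field_simps)
  moreover have "t * p / q + t + 1 = (t * p + (1 + t) * q)/q" using assms by (simp add: field_simps)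
  moreover have "t * p + (1 + t) * q > 0" using assms by (simp add: add_nonneg_pos)
  ultimately show ?thesis using assms by simp
qed

lemma phiw_Mw:
  assumes "0 \<le> a" "0 \<le> b"
  shows "phiw a b u 0 = Mw a b u $1$2 / Mw a b u $2$2"
proof (induction u rule: rev_induct)
  case Nil
  then show ?case by (simp add: phiw_def mat1)
next
  case (snoc c u)
  define t where "t = (if c then b else a)"
  define M where "M = Mw a b u"
  have h: "0 \<le> M$1$2" "1 \<le> M$2$2" using Mw_props[OF assms, of u] by (simp_all add: M_def)
  have t0: "0 \<le> t" using assms by (simp add: t_def)
  have e: "Mw a b (u @ [c]) = Fmat t ** M" by (simp add: Mw_snoc letterM_eq t_def M_def)
  have p: "phi a b c y = (y + 1) / (t * y + t + 1)" for y by (simp add: phi_def t_def)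
  show ?case unfolding phiw_foldl snoc e p mm Fm M_def[symmetric] using h t0
    using frac_aux[of "M$2$2" t "M$1$2"] by simp
qed

lemma tele:
  assumes "j \<le> length u"
  shows "(\<Sum>k=1..j. (Mw a b (take k u) *v s)$2) = esum (Mw a b (take j u) *v s) - esum s"
  using assms
proof (induction j)
  case 0
  then show ?case by simp
next
  case (Suc j)
  define t where "t = (if u!j then b else a)"
  have e: "Mw a b (take (Suc j) u) = Fmat t ** Mw a b (take j u)"
    using Suc.prems by (simp add: take_Suc_conv_app_nth Mw_snoc letterM_eq t_def)
  have "(\<Sum>k=1..Suc j. (Mw a b (take k u) *v s)$2) = (\<Sum>k=1..j. (Mw a b (take k u) *v s)$2)
     + (Mw a b (take (Suc j) u) *v s)$2" by simp
  also have "\<dots> = esum (Mw a b (take j u) *v s) - esum s + (Mw a b (take (Suc j) u) *v s)$2"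
    using Suc by simp
  also have "\<dots> = esum (Mw a b (take (Suc j) u) *v s) - esum s"
    unfolding e matrix_vector_mul_assoc[symmetric] esum_def mv1 mv2 Fm by (simp add: algebra_simps)
  finally show ?case .
qed

lemma FF1: "((Fmat p ** Fmat q) *v z)$1 = (1+q)*z$1 + (2+q)*z$2"
  by (simp add: mv1 mm Fm algebra_simps)
lemma FF2: "((Fmat p ** Fmat q) *v z)$2 = (p+q+p*q)*z$1 + (1+2*p+q+p*q)*z$2"
  by (simp add: mv2 mm Fm algebra_simps)
lemma F1: "(Fmat p *v z)$1 = z$1 + z$2" by (simp add: mv1 Fm)
lemma F2: "(Fmat p *v z)$2 = p*z$1 + (1+p)*z$2" by (simp add: mv2 Fm)

lemma take2: "take (Suc (Suc k)) (x1 # x2 # w) = x1 # x2 # take k w" by simp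

lemma Mw_TF: "Mw a b ([True,False] @ u) = Mw a b u ** (Fmat a ** Fmat b)"
  by (simp add: letterM_def matrix_mul_assoc)
lemma Mw_FT: "Mw a b ([False,True] @ u) = Mw a b u ** (Fmat b ** Fmat a)"
  by (simp add: letterM_def matrix_mul_assoc)

lemma wpow_Suc: "Mw a b (wpow u (Suc n)) = Mw a b u ** Mw a b (wpow u n)"
  by (simp only: wpow_def concat_rep_Suc Mw_append)

lemma Zcol: assumes "0 \<le> a" "0 \<le> b"
  shows "Mw a b z $1$2 + Mw a b z $2$2 \<ge> Mw a b z $1$1 + Mw a b z $2$1"
proof (cases z)
  case Nil
  then show ?thesis by (simp add: mat1)
next
  case (Cons c z0)
  define t where "t = (if c then b else a)"
  have e: "Mw a b z = Mw a b z0 ** Fmat t" by (simp add: Cons letterM_eq t_def)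
  show ?thesis using Mw_props[OF assms, of z0] unfolding e mm Fm by (simp add: algebra_simps)
qed

lemma coreA_alg:
  fixes R :: "real^2^2"
  assumes "1 \<le> R$1$1" "0 \<le> R$2$1" "p$2 = q$2" "c \<le> p$1 - q$1" "0 \<le> c"
  shows "c \<le> esum (R *v p) - esum (R *v q)"
proof -
  have e: "esum (R *v p) - esum (R *v q) = (R$1$1 + R$2$1) * (p$1 - q$1)"
    using assms(3) unfolding esum_def mv1 mv2 by (simp add: algebra_simps)
  have "1 * (p$1 - q$1) \<le> (R$1$1 + R$2$1) * (p$1 - q$1)"
    using assms by (intro mult_right_mono) auto
  then show ?thesis using e assms by simp
qed

lemma coreB_alg:
  fixes R Z :: "real^2^2" and d :: "real^2"
  assumes "R$1$1 * R$2$2 - R$1$2 * R$2$1 = 1"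
    "Z$1$2 + Z$2$2 \<ge> Z$1$1 + Z$2$1"
    "esum ((Z ** R) *v d) = 0" "d$2 \<le> 0" "(Z ** R)$1$1 + (Z ** R)$2$1 > 0"
  shows "0 \<le> esum (R *v d)"
proof -
  define W where "W = Z ** R"
  have id: "(W$1$1 + W$2$1) * esum (R *v d) - (R$1$1 + R$2$1) * esum (W *v d)
     = - d$2 * ((Z$1$2 + Z$2$2) - (Z$1$1 + Z$2$1)) * (R$1$1 * R$2$2 - R$1$2 * R$2$1)"
    unfolding W_def esum_def mv1 mv2 mm by (simp add: algebra_simps)
  have "(W$1$1 + W$2$1) * esum (R *v d) = - d$2 * ((Z$1$2 + Z$2$2) - (Z$1$1 + Z$2$1))"
    using id assms(1,3) by (simp add: W_def)
  moreover have "0 \<le> - d$2 * ((Z$1$2 + Z$2$2) - (Z$1$1 + Z$2$1))"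
    using assms(2,4) by (intro mult_nonneg_nonneg) auto
  ultimately have "0 \<le> (W$1$1 + W$2$1) * esum (R *v d)" by simp
  then show ?thesis using assms(5) unfolding W_def by (simp add: zero_le_mult_iff)
qed

lemma esum_e2: "esum ((M::real^2^2) *v vector [0,1]) = M$1$2 + M$2$2"
  by (simp add: esum_def mv1 mv2)

context
  fixes a b :: real and w :: "bool list"
  assumes a0: "0 \<le> a" and ab: "a < b" and pal: "rev w = w"
begin

lemma b0: "0 \<le> b" using a0 ab by simp

lemma R1: "esum (Mw a b (wpow ([True,False]@w) n) *v (Mw a b w *v vector [0,1]))
         = esum (Mw a b (wpow ([False,True]@w) n) *v (Mw a b w *v vector [0,1]))"
proof -
  have "esum (Mw a b (wpow ([True,False]@w) n) *v (Mw a b w *v vector [0,1]))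
      = esum (Mw a b (w @ wpow ([True,False]@w) n) *v vector [0,1])"
    by (simp add: Mw_append matrix_vector_mul_assoc)
  also have "\<dots> = esum (Mw a b (rev (w @ wpow ([True,False]@w) n)) *v vector [0,1])"
    unfolding esum_e2 using Mw_rev[of a b "w @ wpow ([True,False]@w) n"] by simp
  also have "\<dots> = esum (Mw a b (wpow ([False,True]@w) n) *v (Mw a b w *v vector [0,1]))"
    unfolding revL1[OF pal] by (simp add: Mw_append matrix_vector_mul_assoc)
  finally show ?thesis .
qed

lemma R2: "((Fmat a ** Fmat b) *v (Mw a b (wpow ([True,False]@w) n) *v vector [1,0]))$2
         = ((Fmat b ** Fmat a) *v (Mw a b (wpow ([False,True]@w) n) *v vector [1,0]))$2"
proof -
  have e1: "(Fmat a ** Fmat b) ** Mw a b (wpow ([True,False]@w) n) = Mw a b (wpow ([True,False]@w) n @ [True,False])"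
    by (simp add: Mw_append letterM_def)
  have e2: "(Fmat b ** Fmat a) ** Mw a b (wpow ([False,True]@w) n) = Mw a b (wpow ([False,True]@w) n @ [False,True])"
    by (simp add: Mw_append letterM_def)
  show ?thesis unfolding matrix_vector_mul_assoc e1 e2 mv2 vector_2
    using Mw_rev[of a b "wpow ([True,False]@w) n @ [True,False]"] unfolding revL2[OF pal] by simp
qed

abbreviation "SA n \<equiv> Mw a b (wpow ([True,False]@w) n) *v vector [1,0]"
abbreviation "TA n \<equiv> Mw a b (wpow ([False,True]@w) n) *v vector [1,0]"
abbreviation "SB n \<equiv> Mw a b (wpow ([True,False]@w) n) *v (Mw a b w *v vector [0,1])"
abbreviation "TB n \<equiv> Mw a b (wpow ([False,True]@w) n) *v (Mw a b w *v vector [0,1])"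

lemma nn: "0 \<le> z$1 \<Longrightarrow> 0 \<le> z$2 \<Longrightarrow> 0 \<le> (Mw a b u *v z)$1 \<and> 0 \<le> (Mw a b u *v z)$2"
  using Mw_nonneg[OF a0 b0] by blast

lemma SA_Suc: "SA (Suc n) = Mw a b w *v ((Fmat a ** Fmat b) *v SA n)"
  by (simp add: wpow_Suc Mw_TF matrix_vector_mul_assoc matrix_mul_assoc letterM_def)
lemma TA_Suc: "TA (Suc n) = Mw a b w *v ((Fmat b ** Fmat a) *v TA n)"
  by (simp add: wpow_Suc Mw_FT matrix_vector_mul_assoc matrix_mul_assoc letterM_def)
lemma SB_Suc: "SB (Suc n) = Mw a b w *v ((Fmat a ** Fmat b) *v SB n)"
  by (simp add: wpow_Suc Mw_TF matrix_vector_mul_assoc matrix_mul_assoc letterM_def)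
lemma TB_Suc: "TB (Suc n) = Mw a b w *v ((Fmat b ** Fmat a) *v TB n)"
  by (simp add: wpow_Suc Mw_FT matrix_vector_mul_assoc matrix_mul_assoc letterM_def)

lemma TA_nn: "0 \<le> TA n $1 \<and> 0 \<le> TA n $2" by (rule nn) simp_all
lemma TB_nn: "0 \<le> TB n $1 \<and> 0 \<le> TB n $2"
  using nn[of "vector [0,1]" w] by (intro nn) simp_all

lemma invA: "TA n $1 \<le> SA n $1 \<and> TA n $2 \<le> SA n $2"
proof (induction n)
  case 0
  then show ?case by (simp add: wpow_def)
next
  case (Suc n)
  define p where "p = (Fmat a ** Fmat b) *v SA n"
  define q where "q = (Fmat b ** Fmat a) *v TA n"
  have p2: "p$2 = q$2" using R2[of n] by (simp add: p_def q_def)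
  have t: "0 \<le> TA n $1" "0 \<le> TA n $2" using TA_nn by auto
  have "(1+a) * TA n $1 \<le> (1+b) * SA n $1" using Suc t a0 ab by (intro mult_mono) auto
  moreover have "(2+a) * TA n $2 \<le> (2+b) * SA n $2" using Suc t a0 ab by (intro mult_mono) auto
  ultimately have p1: "q$1 \<le> p$1" unfolding p_def q_def FF1 by linarith
  define W where "W = Mw a b w"
  have W: "0 \<le> W$1$1" "0 \<le> W$2$1" using Mw_props[OF a0 b0, of w] by (auto simp: W_def)
  have "W$1$1 * q$1 \<le> W$1$1 * p$1" "W$2$1 * q$1 \<le> W$2$1 * p$1"
    using W p1 by (auto intro: mult_left_mono)
  then show ?case unfolding SA_Suc TA_Suc p_def[symmetric] q_def[symmetric] W_def[symmetric] mv1 mv2 p2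
    by simp
qed

lemma invB: "0 \<le> SB n $1 - TB n $1 \<and> SB n $1 - TB n $1 \<le> (b - a) * esum (TB n)"
proof (induction n)
  case 0
  then show ?case using TB_nn[of 0] ab by (simp add: wpow_def esum_def)
next
  case (Suc n)
  define p where "p = (Fmat a ** Fmat b) *v SB n"
  define q where "q = (Fmat b ** Fmat a) *v TB n"
  define W where "W = Mw a b w"
  define D where "D = SB n $1 - TB n $1"
  define T1 where "T1 = TB n $1"
  define T2 where "T2 = TB n $2"
  have S1: "SB n $1 = T1 + D" by (simp add: D_def T1_def)
  have S2: "SB n $2 = T2 - D" using R1[of n] by (simp add: D_def T1_def T2_def esum_def)
  have d2: "p$2 - q$2 = -(1+a)*D - (b-a)*T2"
    unfolding p_def q_def FF2 S1 S2 T1_def[symmetric] T2_def[symmetric] by (simp add: algebra_simps)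
  have Wp: "0 \<le> W$1$2" "0 \<le> W$2$1" "1 \<le> W$1$1" "1 \<le> W$2$2" "W$1$1 * W$2$2 - W$1$2 * W$2$1 = 1"
    using Mw_props[OF a0 b0, of w] by (auto simp: W_def)
  have eq: "esum (W *v p) = esum (W *v q)" using R1[of "Suc n"]
    unfolding SB_Suc TB_Suc by (simp add: p_def q_def W_def)
  have key: "(W$1$1 + W$2$1) * ((W *v p)$1 - (W *v q)$1) = -(p$2 - q$2)"
  proof -
    have "(W$1$1 + W$2$1) * (p$1 - q$1) + (W$1$2 + W$2$2) * (p$2 - q$2) = 0"
      using eq unfolding esum_def mv1 mv2 by (simp add: algebra_simps)
    then have "(W$1$1 + W$2$1) * ((W *v p)$1 - (W *v q)$1) = 
       (W$1$1 + W$2$1) * ((W *v p)$1 - (W *v q)$1) - W$1$1 * ((W$1$1 + W$2$1) * (p$1 - q$1) + (W$1$2 + W$2$2) * (p$2 - q$2))"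
      by simp
    also have "\<dots> = - (W$1$1 * W$2$2 - W$1$2 * W$2$1) * (p$2 - q$2)"
      unfolding mv1 by (simp add: algebra_simps)
    finally show ?thesis using Wp(5) by simp
  qed
  have t: "0 \<le> T1" "0 \<le> T2" using TB_nn[of n] by (auto simp: T1_def T2_def)
  have Dn: "0 \<le> D" "D \<le> (b-a) * (T1 + T2)" using Suc by (auto simp: D_def T1_def T2_def esum_def)
  have "0 \<le> (1+a)*D" "0 \<le> (b-a)*T2" using Dn t a0 ab by auto
  then have nd0: "0 \<le> -(p$2 - q$2)" unfolding d2 by (simp add: algebra_simps)
  have "(1+a) * D \<le> (1+a) * ((b-a) * (T1 + T2))" using Dn a0 by (intro mult_left_mono) auto
  then have nd1: "-(p$2 - q$2) \<le> (b-a) * esum (Fmat a *v TB n)"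
    unfolding d2 esum_def F1 F2 T1_def[symmetric] T2_def[symmetric] by (simp add: algebra_simps)
  have FT: "0 \<le> (Fmat a *v TB n)$1" "0 \<le> (Fmat a *v TB n)$2" using t
    unfolding F1 F2 T1_def T2_def using a0 by auto
  have TBS: "TB (Suc n) = Mw a b (True # w) *v (Fmat a *v TB n)"
    unfolding TB_Suc by (simp add: letterM_def matrix_vector_mul_assoc matrix_mul_assoc letterM_def)
  have grow: "esum (Fmat a *v TB n) \<le> esum (TB (Suc n))"
    unfolding TBS using Mw_esum[OF a0 b0 FT] .
  have tsnn: "0 \<le> esum (TB (Suc n))" using TB_nn[of "Suc n"] by (simp add: esum_def)
  define X where "X = (W *v p)$1 - (W *v q)$1"
  have key': "(W$1$1 + W$2$1) * X = -(p$2 - q$2)" using key by (simp add: X_def)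
  have wpos: "1 \<le> W$1$1 + W$2$1" using Wp by simp
  have "0 \<le> (W$1$1 + W$2$1) * X" using key' nd0 by simp
  then have X0: "0 \<le> X" using wpos by (simp add: zero_le_mult_iff)
  have "X = 1 * X" by simp
  also have "\<dots> \<le> (W$1$1 + W$2$1) * X" using wpos X0 by (intro mult_right_mono) auto
  also have "\<dots> \<le> (b - a) * esum (TB (Suc n))" using key' nd1 grow ab by (simp add: mult_left_mono order_trans)
  finally have X1: "X \<le> (b - a) * esum (TB (Suc n))" .
  have "X = SB (Suc n) $1 - TB (Suc n) $1"
    unfolding X_def p_def q_def W_def by (simp only: SB_Suc TB_Suc)
  then show ?case using X0 X1 by simp
qed

lemma esumF: "esum (Fmat t *v z) = (1+t) * (z$1 + z$2) + z$2"
  by (simp add: esum_def F1 F2 algebra_simps)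

lemma take_cases:
  assumes "1 \<le> j"
  obtains "j = 1" | k where "j = Suc (Suc k)"
  using assms by (metis One_nat_def Suc_le_D not0_implies_Suc)

lemma EA:
  assumes "1 \<le> j"
  shows "esum (Mw a b (take j ([False,True]@w)) *v TA n) - esum (TA n)
       \<le> esum (Mw a b (take j ([True,False]@w)) *v SA n) - esum (SA n)"
proof -
  have t: "0 \<le> TA n $1" "0 \<le> TA n $2" using TA_nn by auto
  have st: "TA n $1 \<le> SA n $1" "TA n $2 \<le> SA n $2" using invA by auto
  have m1: "a * TA n $1 \<le> b * SA n $1" "a * TA n $2 \<le> b * SA n $2"
    using t st a0 ab by (auto intro: mult_mono)
  from assms show ?thesis
  proof (cases rule: take_cases)
    case 1
    then show ?thesis using m1 st by (simp add: letterM_def esum_def F1 F2 algebra_simps)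
  next
    case (2 k)
    define R where "R = Mw a b (take k w)"
    have eS: "Mw a b (take j ([True,False]@w)) = R ** (Fmat a ** Fmat b)"
      using Mw_TF[of a b "take k w"] by (simp add: 2 R_def)
    have eT: "Mw a b (take j ([False,True]@w)) = R ** (Fmat b ** Fmat a)"
      using Mw_FT[of a b "take k w"] by (simp add: 2 R_def)
    define p where "p = (Fmat a ** Fmat b) *v SA n"
    define q where "q = (Fmat b ** Fmat a) *v TA n"
    have p2: "p$2 = q$2" using R2[of n] by (simp add: p_def q_def)
    have Rp: "1 \<le> R$1$1" "0 \<le> R$2$1" using Mw_props[OF a0 b0, of "take k w"] by (auto simp: R_def)
    have c0: "0 \<le> esum (SA n) - esum (TA n)" using st by (simp add: esum_def)
    have "2 * TA n $2 \<le> 2 * SA n $2" using st by simp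
    then have pq: "esum (SA n) - esum (TA n) \<le> p$1 - q$1"
      unfolding p_def q_def FF1 esum_def using m1 st by (simp add: algebra_simps)
    have "esum (SA n) - esum (TA n) \<le> esum (R *v p) - esum (R *v q)"
      by (rule coreA_alg[OF Rp p2 pq c0])
    then show ?thesis unfolding eS eT matrix_vector_mul_assoc[symmetric] p_def q_def by simp
  qed
qed

lemma EB:
  assumes "1 \<le> j" "j \<le> length w + 2"
  shows "esum (Mw a b (take j ([False,True]@w)) *v TB n) - esum (TB n)
       \<le> esum (Mw a b (take j ([True,False]@w)) *v SB n) - esum (SB n)"
proof -
  have t: "0 \<le> TB n $1" "0 \<le> TB n $2" using TB_nn by auto
  define D where "D = SB n $1 - TB n $1"
  have S1: "SB n $1 = TB n $1 + D" by (simp add: D_def)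
  have S2: "SB n $2 = TB n $2 - D" using R1[of n] by (simp add: D_def esum_def)
  have Dn: "0 \<le> D" "D \<le> (b-a) * (TB n $1 + TB n $2)" using invB[of n] by (auto simp: D_def esum_def)
  have es: "esum (SB n) = esum (TB n)" using R1[of n] by simp
  from assms(1) show ?thesis
  proof (cases rule: take_cases)
    case 1
    have "esum (Fmat a *v TB n) - esum (TB n) \<le> esum (Fmat b *v SB n) - esum (SB n)"
      unfolding esumF S1 S2 using Dn es by (simp add: algebra_simps)
    then show ?thesis using 1 by (simp add: letterM_def)
  next
    case (2 k)
    define R where "R = Mw a b (take k w)"
    define Z where "Z = Mw a b (drop k w)"
    have W: "Mw a b w = Z ** R"
      using Mw_append[of a b "take k w" "drop k w"] by (simp add: Z_def R_def)
    have eS: "Mw a b (take j ([True,False]@w)) = R ** (Fmat a ** Fmat b)"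
      using Mw_TF[of a b "take k w"] by (simp add: 2 R_def)
    have eT: "Mw a b (take j ([False,True]@w)) = R ** (Fmat b ** Fmat a)"
      using Mw_FT[of a b "take k w"] by (simp add: 2 R_def)
    define p where "p = (Fmat a ** Fmat b) *v SB n"
    define q where "q = (Fmat b ** Fmat a) *v TB n"
    have d2: "(p - q)$2 = -(1+a)*D - (b-a)*TB n $2"
      unfolding p_def q_def vector_minus_component FF2 S1 S2 by (simp add: algebra_simps)
    have "0 \<le> (1+a)*D" "0 \<le> (b-a)*TB n $2" using Dn t a0 ab by auto
    then have d2n: "(p - q)$2 \<le> 0" unfolding d2 by (simp add: algebra_simps)
    have eW: "esum ((Z ** R) *v (p - q)) = 0"
    proof -
      have "esum (SB (Suc n)) = esum (TB (Suc n))" by (rule R1)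
      then have "esum (Mw a b w *v p) = esum (Mw a b w *v q)" by (simp only: SB_Suc TB_Suc p_def q_def)
      then show ?thesis unfolding W[symmetric] esum_def mv1 mv2 vector_minus_component
        by (simp add: algebra_simps)
    qed
    have Wp: "1 \<le> (Z ** R)$1$1" "0 \<le> (Z ** R)$2$1" using Mw_props[OF a0 b0, of w] W by auto
    have detR: "R$1$1 * R$2$2 - R$1$2 * R$2$1 = 1" using Mw_props[OF a0 b0, of "take k w"] by (simp add: R_def)
    have "0 \<le> esum (R *v (p - q))"
      using coreB_alg[OF detR Zcol[OF a0 b0, of "drop k w", folded Z_def] eW d2n] Wp by simp
    then have "0 \<le> esum (R *v p) - esum (R *v q)"
      unfolding esum_def mv1 mv2 vector_minus_component by (simp add: algebra_simps)
    then show ?thesis unfolding eS eT matrix_vector_mul_assoc[symmetric] p_def q_def using es by simp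
  qed
qed

lemma esum_lin: "esum ((A::real^2^2) *v z) = esum (A *v vector[1,0]) * z$1 + esum (A *v vector[0,1]) * z$2"
  by (simp add: esum_def mv1 mv2 algebra_simps)

lemma Ecomb:
  assumes hx: "phiw a b w 0 \<le> x" and j: "1 \<le> j" "j \<le> length w + 2"
  shows "esum (Mw a b (take j ([False,True]@w)) *v (Mw a b (wpow ([False,True]@w) n) *v vector [x,1]))
       - esum (Mw a b (wpow ([False,True]@w) n) *v vector [x,1])
       \<le> esum (Mw a b (take j ([True,False]@w)) *v (Mw a b (wpow ([True,False]@w) n) *v vector [x,1]))
       - esum (Mw a b (wpow ([True,False]@w) n) *v vector [x,1])"
proof -
  define X where "X = Mw a b (take j ([True,False]@w)) ** Mw a b (wpow ([True,False]@w) n)"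
  define Y where "Y = Mw a b (take j ([False,True]@w)) ** Mw a b (wpow ([False,True]@w) n)"
  define P where "P = Mw a b (wpow ([True,False]@w) n)"
  define Q where "Q = Mw a b (wpow ([False,True]@w) n)"
  define E where "E z = esum (X *v z) - esum (P *v z) - esum (Y *v z) + esum (Q *v z)" for z
  have Elin: "E z = E (vector[1,0]) * z$1 + E (vector[0,1]) * z$2" for z
    unfolding E_def using esum_lin[of X z] esum_lin[of P z] esum_lin[of Y z] esum_lin[of Q z]
    by (simp add: algebra_simps)
  have E1: "0 \<le> E (vector [1,0])" using EA[OF j(1), of n]
    unfolding E_def X_def Y_def P_def Q_def matrix_vector_mul_assoc by simp
  define W where "W = Mw a b w"
  have E2: "0 \<le> E (W *v vector [0,1])" using EB[OF j, of n]
    unfolding E_def X_def Y_def P_def Q_def W_def matrix_vector_mul_assoc by (simp add: matrix_mul_assoc)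
  have Wv: "(W *v vector [0,1])$1 = W$1$2" "(W *v vector [0,1])$2 = W$2$2" by (simp_all add: mv1 mv2)
  have Wp: "1 \<le> W$2$2" using Mw_props[OF a0 b0, of w] by (simp add: W_def)
  have phi: "phiw a b w 0 = W$1$2 / W$2$2" using phiw_Mw[OF a0 b0] by (simp add: W_def)
  have xW: "W$1$2 \<le> x * W$2$2" using hx Wp unfolding phi by (simp add: divide_le_eq)
  have "E (vector [x,1]) * W$2$2 = E (vector [1,0]) * (x * W$2$2 - W$1$2) + E (W *v vector [0,1])"
    using Elin[of "vector [x,1]"] Elin[of "W *v vector [0,1]"] unfolding Wv by (simp add: algebra_simps)
  moreover have "0 \<le> E (vector [1,0]) * (x * W$2$2 - W$1$2)" using E1 xW by simp
  ultimately have "0 \<le> E (vector [x,1]) * W$2$2" using E2 by simp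
  then have "0 \<le> E (vector [x,1])" using Wp by (simp add: zero_le_mult_iff)
  then show ?thesis unfolding E_def X_def Y_def P_def Q_def matrix_vector_mul_assoc by simp
qed

end

theorem proposition7:
  fixes a b x :: real and w :: "bool list"
  assumes "0 \<le> a" and "a < b" and "rev w = w" and "x \<ge> phiw a b w 0"
  shows "\<forall>n::nat.
     let m = length ([True, False] @ w);
         xs = (\<lambda>k. seqval a b ([True, False] @ w) n k x);
         ys = (\<lambda>k. seqval a b ([False, True] @ w) n k x)
     in (\<forall>k\<in>{1..m}. 0 \<le> xs k \<and> 0 \<le> ys k)
      \<and> (\<forall>k\<in>{1..<m}. xs k \<le> xs (k + 1) \<and> ys k \<le> ys (k + 1))
      \<and> (\<forall>j\<in>{1..m}. (\<Sum>k=1..j. xs k) \<ge> (\<Sum>k=1..j. ys k))"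
proof
  fix n :: nat
  have a0: "0 \<le> a" and b0: "0 \<le> b" using assms by auto
  have x0: "0 \<le> x"
  proof -
    have "0 \<le> Mw a b w $1$2" "1 \<le> Mw a b w $2$2" using Mw_props[OF a0 b0, of w] by auto
    then have "0 \<le> phiw a b w 0" unfolding phiw_Mw[OF a0 b0] by simp
    then show ?thesis using assms(4) by simp
  qed
  define v where "v = (vector [x, 1] :: real^2)"
  have sv: "seqval a b u n k x = (Mw a b (take k u) *v (Mw a b (wpow u n) *v v))$2" for u k
    by (simp add: seqval_def v_def Mw_append matrix_vector_mul_assoc)
  have nnz: "0 \<le> (Mw a b u *v v)$1 \<and> 0 \<le> (Mw a b u *v v)$2" for u
    using Mw_nonneg[OF a0 b0, of v u] x0 by (simp add: v_def)
  have nn: "0 \<le> seqval a b u n k x" for u k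
    unfolding sv using Mw_nonneg[OF a0 b0, of "Mw a b (wpow u n) *v v" "take k u"] nnz[of "wpow u n"] by simp
  have mono: "seqval a b u n k x \<le> seqval a b u n (k+1) x" if "k < length u" for u k
  proof -
    define z where "z = Mw a b (take k u) *v (Mw a b (wpow u n) *v v)"
    define t where "t = (if u!k then b else a)"
    have z0: "0 \<le> z$1" "0 \<le> z$2"
      using Mw_nonneg[OF a0 b0, of "Mw a b (wpow u n) *v v" "take k u"] nnz[of "wpow u n"] unfolding z_def by auto
    have t0: "0 \<le> t" using a0 b0 by (simp add: t_def)
    have e: "seqval a b u n (k+1) x = (Fmat t *v z)$2"
      unfolding sv z_def using that
      by (simp add: take_Suc_conv_app_nth Mw_snoc letterM_eq t_def matrix_vector_mul_assoc matrix_mul_assoc)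
    have "0 \<le> t * z$1 + t * z$2" using z0 t0 by simp
    moreover have "seqval a b u n k x = z$2" by (simp add: sv z_def)
    ultimately show ?thesis unfolding e F2 by (simp add: algebra_simps)
  qed
  show "let m = length ([True, False] @ w);
         xs = (\<lambda>k. seqval a b ([True, False] @ w) n k x);
         ys = (\<lambda>k. seqval a b ([False, True] @ w) n k x)
     in (\<forall>k\<in>{1..m}. 0 \<le> xs k \<and> 0 \<le> ys k)
      \<and> (\<forall>k\<in>{1..<m}. xs k \<le> xs (k + 1) \<and> ys k \<le> ys (k + 1))
      \<and> (\<forall>j\<in>{1..m}. (\<Sum>k=1..j. xs k) \<ge> (\<Sum>k=1..j. ys k))"
  proof -
    have sums: "(\<Sum>k=1..j. seqval a b ([False, True] @ w) n k x) \<le> (\<Sum>k=1..j. seqval a b ([True, False] @ w) n k x)"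
      if "1 \<le> j" "j \<le> length w + 2" for j
    proof -
      have l1: "j \<le> length ([True, False] @ w)" "j \<le> length ([False, True] @ w)" using that by auto
      show ?thesis unfolding sv tele[OF l1(1)] tele[OF l1(2)] v_def
        using Ecomb[OF assms(1,2,3,4) that, of n] by simp
    qed
    show ?thesis using nn mono sums by (auto simp: Let_def)
  qed
qed

end
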